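(* Let $S$ be a MANS-semigroup with $\mathrm{msg}(S)=\{n_1<n_2<\cdots<n_e\}$, where $2\leq e\leq n_1-1$, and let $\mathrm{Ap}(S,n_1)=\{w(0),w(1),\ldots,w(n_1-1)\}$ with $w(i)$ the least element of $S$ congruent to $i$ modulo $n_1$. If $n_{e+1}\in\mathbb{N}$ satisfies $n_e<n_{e+1}$, $n_e\bmod n_1<n_{e+1}\bmod n_1$, and $w(n_{e+1}\bmod n_1-1)<n_{e+1}<w(n_{e+1}\bmod n_1)$, then $S'=\langle n_1,\ldots,n_e,n_{e+1}\rangle$ is a MANS-semigroup with $\mathrm{e}(S')=\mathrm{e}(S)+1$.
   Context: $\mathbb{N}=\{0,1,2,\ldots\}$. A numerical semigroup is a subset $S\subseteq\mathbb{N}$ closed under addition, containing $0$, with $\mathbb{N}\setminus S$ finite; $\langle A\rangle$ is the submonoid generated by $A$; $\mathrm{msg}(S)$ is the unique finite minimal system of generators and $\mathrm{e}(S)=|\mathrm{msg}(S)|$. For $n\in S\setminus\{0\}$, $\mathrm{Ap}(S,n)=\{s\in S:s-n\notin S\}$. $S$ is a MANS-semigroup if $w(1)<\cdots<w(\mathrm{m}(S)-1)$, where $\mathrm{m}(S)$ is the least element of $S\setminus\{0\}$ and $w(i)$ the least element of $S$ congruent to $i$ modulo $\mathrm{m}(S)$. $a\bmod b$ is the remainder of the division of $a$ by $b$. *)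

theory Defs
  imports Main
begin

definition numerical_semigroup :: "nat set \<Rightarrow> bool" where
  "numerical_semigroup S \<longleftrightarrow>
     0 \<in> S \<and> (\<forall>a\<in>S. \<forall>b\<in>S. a + b \<in> S) \<and> finite (UNIV - S)"

inductive_set gen :: "nat set \<Rightarrow> nat set" for A :: "nat set" where
  gen_zero: "0 \<in> gen A"
| gen_add: "a \<in> A \<Longrightarrow> x \<in> gen A \<Longrightarrow> a + x \<in> gen A"

definition is_min_gen :: "nat set \<Rightarrow> nat set \<Rightarrow> bool" where
  "is_min_gen A S \<longleftrightarrow> gen A = S \<and> (\<forall>B. B \<subset> A \<longrightarrow> gen B \<noteq> S)"

definition msg :: "nat set \<Rightarrow> nat set" where
  "msg S = (THE A. finite A \<and> is_min_gen A S)"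

definition emb_dim :: "nat set \<Rightarrow> nat" where
  "emb_dim S = card (msg S)"

definition mult :: "nat set \<Rightarrow> nat" where
  "mult S = (LEAST x. x \<in> S \<and> x \<noteq> 0)"

definition wAp :: "nat set \<Rightarrow> nat \<Rightarrow> nat" where
  "wAp S i = (LEAST x. x \<in> S \<and> x mod mult S = i mod mult S)"

definition MANS :: "nat set \<Rightarrow> bool" where
  "MANS S \<longleftrightarrow> numerical_semigroup S \<and>
     (\<forall>i j. 1 \<le> i \<and> i < j \<and> j \<le> mult S - 1 \<longrightarrow> wAp S i < wAp S j)"

end

theory Submission
  imports Defs
begin

definition Irr :: "nat set \<Rightarrow> nat set" where
  "Irr S = {y \<in> S. y \<noteq> 0 \<and> (\<forall>a\<in>S. \<forall>b\<in>S. a + b = y \<longrightarrow> a = 0 \<or> b = 0)}"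

lemma gen_add_closed: "a \<in> gen B \<Longrightarrow> b \<in> gen B \<Longrightarrow> a + b \<in> gen B"
  by (induction a rule: gen.induct) (auto simp: add.assoc intro: gen.intros)

lemma gen_sub:
  assumes "B \<subseteq> S" "0 \<in> S" "\<forall>a\<in>S. \<forall>b\<in>S. a+b \<in> S"
  shows "gen B \<subseteq> S"
proof
  fix y assume "y \<in> gen B" thus "y \<in> S" by induction (use assms in auto)
qed

lemma gen_base: "a \<in> B \<Longrightarrow> a \<in> gen B"
  using gen_add[of a B 0] gen_zero by simp

lemma gen_mono: assumes "A \<subseteq> B" shows "gen A \<subseteq> gen B"
proof
  fix y assume "y \<in> gen A" thus "y \<in> gen B"
    by induction (use assms in \<open>auto intro: gen.intros\<close>)
qed

lemma ns_gen_sub: "numerical_semigroup S \<Longrightarrow> B \<subseteq> S \<Longrightarrow> gen B \<subseteq> S"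
  by (rule gen_sub) (auto simp: numerical_semigroup_def)

lemma irr_in:
  assumes "y \<in> gen B" "B \<subseteq> S" "y \<in> Irr S" "numerical_semigroup S"
  shows "y \<in> B"
  using assms(1,3)
proof induction
  case gen_zero thus ?case by (simp add: Irr_def)
next
  case (gen_add a z)
  have "z \<in> S" using ns_gen_sub[OF assms(4,2)] gen_add by auto
  moreover have "a \<in> S" using gen_add assms(2) by auto
  ultimately have "a = 0 \<or> z = 0" using gen_add(4) unfolding Irr_def by blast
  thus ?case using gen_add by auto
qed

lemma gen_Irr: assumes "numerical_semigroup S" shows "gen (Irr S) = S"
proof
  show "gen (Irr S) \<subseteq> S" by (rule ns_gen_sub[OF assms]) (auto simp: Irr_def)
next
  have "\<forall>y. y \<in> S \<longrightarrow> y \<in> gen (Irr S)"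
  proof (rule allI, induct_tac y rule: less_induct)
    fix y assume IH: "\<And>z. z < y \<Longrightarrow> z \<in> S \<longrightarrow> z \<in> gen (Irr S)"
    show "y \<in> S \<longrightarrow> y \<in> gen (Irr S)"
    proof
      assume yS: "y \<in> S"
      show "y \<in> gen (Irr S)"
      proof (cases "y = 0 \<or> y \<in> Irr S")
        case True thus ?thesis using gen_zero gen_base by auto
      next
        case False
        then obtain a b where "a \<in> S" "b \<in> S" "a + b = y" "a \<noteq> 0" "b \<noteq> 0"
          using yS unfolding Irr_def by blast
        thus ?thesis using IH[of a] IH[of b] gen_add_closed by force
      qed
    qed
  qed
  thus "S \<subseteq> gen (Irr S)" by blast
qed

lemma Irr_finite: assumes "numerical_semigroup S" shows "finite (Irr S)"
proof -
  have "finite (UNIV - S)" using assms by (simp add: numerical_semigroup_def)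
  then obtain N where N: "\<forall>z\<in>UNIV - S. z < N" using finite_nat_set_iff_bounded by blast
  have "Irr S \<subseteq> {..<2*(N+1)}"
  proof
    fix y assume y: "y \<in> Irr S"
    show "y \<in> {..<2*(N+1)}"
    proof (rule ccontr)
      assume "y \<notin> {..<2*(N+1)}"
      hence "y \<ge> 2*(N+1)" by simp
      have NN: "\<forall>z. z \<ge> N \<longrightarrow> z \<in> S" using N by (metis Diff_iff UNIV_I not_le)
      hence "N+1 \<in> S" "y - (N+1) \<in> S" using \<open>y \<ge> 2*(N+1)\<close> by auto
      moreover have "(N+1) + (y - (N+1)) = y" "y - (N+1) \<noteq> 0" using \<open>y \<ge> 2*(N+1)\<close> by auto
      moreover from y have "\<forall>a\<in>S. \<forall>b\<in>S. a+b=y \<longrightarrow> a=0 \<or> b=0" by (simp add: Irr_def)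
      ultimately have "N+1 = 0 \<or> y-(N+1) = 0" by metis
      thus False using \<open>y - (N+1) \<noteq> 0\<close> by simp
    qed
  qed
  thus ?thesis using finite_subset by blast
qed

lemma msg_eq: assumes "numerical_semigroup S" shows "msg S = Irr S"
  unfolding msg_def
proof (rule the_equality)
  show "finite (Irr S) \<and> is_min_gen (Irr S) S"
    unfolding is_min_gen_def
  proof (intro conjI allI impI)
    show "finite (Irr S)" using Irr_finite[OF assms] .
    show "gen (Irr S) = S" using gen_Irr[OF assms] .
    fix B assume B: "B \<subset> Irr S"
    show "gen B \<noteq> S"
    proof
      assume "gen B = S"
      hence "Irr S \<subseteq> B" using irr_in[of _ B S] B assms by (auto simp: Irr_def)
      thus False using B by blast
    qed
  qed
next
  fix A assume A: "finite A \<and> is_min_gen A S"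
  hence gA: "gen A = S" by (simp add: is_min_gen_def)
  have AS: "A \<subseteq> S" using gA gen_base by blast
  have "Irr S \<subseteq> A"
  proof
    fix y assume yI: "y \<in> Irr S"
    hence "y \<in> gen A" using gA by (simp add: Irr_def)
    thus "y \<in> A" by (rule irr_in[OF _ AS yI assms])
  qed
  moreover have "\<not> Irr S \<subset> A" using A gen_Irr[OF assms] by (auto simp: is_min_gen_def)
  ultimately show "A = Irr S" by blast
qed

lemma decomp:
  assumes "gen A = S" "y \<in> gen (A \<union> {x})"
  shows "y \<in> S \<or> (\<exists>y'\<in>gen (A \<union> {x}). y = y' + x)"
  using assms(2)
proof induction
  case gen_zero thus ?case using assms(1) gen.gen_zero by blast
next
  case (gen_add a z)
  show ?case
  proof (cases "a = x")
    case True thus ?thesis using gen_add by auto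
  next
    case False
    hence aA: "a \<in> A" using gen_add by auto
    from gen_add(3) show ?thesis
    proof
      assume "z \<in> S" thus ?thesis using aA assms(1) gen.gen_add by blast
    next
      assume "\<exists>y'\<in>gen (A \<union> {x}). z = y' + x"
      then obtain y' where "y' \<in> gen (A \<union> {x})" "z = y' + x" by blast
      moreover have "a \<in> A \<union> {x}" using aA by blast
      ultimately show ?thesis using gen.gen_add[of a "A \<union> {x}" y'] by (auto simp: add.assoc)
    qed
  qed
qed

lemma wAp_props:
  assumes "numerical_semigroup T" "mult T > 0"
  shows "wAp T j \<in> T \<and> wAp T j mod mult T = j mod mult T"
    and "z \<in> T \<Longrightarrow> z mod mult T = j mod mult T \<Longrightarrow> wAp T j \<le> z"
proof -
  have "finite (UNIV - T)" using assms by (simp add: numerical_semigroup_def)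
  then obtain N where N: "\<forall>z\<in>UNIV - T. z < N" using finite_nat_set_iff_bounded by blast
  have "N \<le> mult T * N" using assms(2) by simp
  hence "j + mult T * N \<ge> N" by linarith
  moreover have NN: "\<forall>z. z \<ge> N \<longrightarrow> z \<in> T" using N by (metis Diff_iff UNIV_I not_le)
  ultimately have "j + mult T * N \<in> T" by blast
  moreover have "(j + mult T * N) mod mult T = j mod mult T" by simp
  ultimately have "j + mult T * N \<in> T \<and> (j + mult T * N) mod mult T = j mod mult T" by blast
  thus "wAp T j \<in> T \<and> wAp T j mod mult T = j mod mult T"
    unfolding wAp_def by (rule LeastI)
  show "z \<in> T \<Longrightarrow> z mod mult T = j mod mult T \<Longrightarrow> wAp T j \<le> z"
    unfolding wAp_def by (rule Least_le) blast
qed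

theorem lemma4p1:
  fixes S :: "nat set" and n :: "nat \<Rightarrow> nat" and e :: nat and x :: nat
  assumes "MANS S"
    and "msg S = n ` {1..e}"
    and "strict_mono_on {1..e} n"
    and "2 \<le> e" and "e \<le> n 1 - 1"
    and "n e < x"
    and "n e mod n 1 < x mod n 1"
    and "wAp S (x mod n 1 - 1) < x"
    and "x < wAp S (x mod n 1)"
  shows "MANS (gen (n ` {1..e} \<union> {x})) \<and>
         emb_dim (gen (n ` {1..e} \<union> {x})) = emb_dim S + 1"
proof -
  define m where "m = n 1"
  define A where "A = n ` {1..e}"
  define S' where "S' = gen (A \<union> {x})"
  define r where "r = x mod m"
  have NS: "numerical_semigroup S" using assms(1) by (simp add: MANS_def)
  have AI: "Irr S = A" using msg_eq[OF NS] assms(2) by (simp add: A_def)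
  have gA: "gen A = S" using gen_Irr[OF NS] AI by simp
  have SS': "S \<subseteq> S'" unfolding S'_def using gen_mono[of A "A \<union> {x}"] gA by auto
  have nle: "n 1 \<le> n k \<and> n k \<le> n e" if "k \<in> {1..e}" for k
    using that assms(3,4) strict_mono_on_leD[OF assms(3)] by auto
  have n1I: "n 1 \<in> Irr S" using AI assms(4) by (auto simp: A_def)
  have n1pos: "n 1 > 0" using n1I by (simp add: Irr_def)
  have n1S: "n 1 \<in> S" using n1I by (simp add: Irr_def)
  have multS: "mult S = m"
  proof -
    have ex: "n 1 \<in> S \<and> n 1 \<noteq> 0" using n1S n1pos by simp
    define m0 where "m0 = mult S"
    have m0P: "m0 \<in> S \<and> m0 \<noteq> 0" unfolding m0_def mult_def by (rule LeastI[of "\<lambda>x. x \<in> S \<and> x \<noteq> 0", OF ex])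
    have m0le: "m0 \<le> n 1" unfolding m0_def mult_def by (rule Least_le[of "\<lambda>x. x \<in> S \<and> x \<noteq> 0", OF ex])
    have "m0 \<in> Irr S"
    proof -
      have "a = 0 \<or> b = 0" if "a \<in> S" "b \<in> S" "a + b = m0" for a b
      proof (rule ccontr)
        assume "\<not> (a = 0 \<or> b = 0)"
        hence "a < m0" "a \<in> S \<and> a \<noteq> 0" using that by auto
        moreover have "m0 \<le> a" unfolding m0_def mult_def by (rule Least_le) (use calculation in blast)
        ultimately show False by simp
      qed
      thus ?thesis using m0P by (auto simp: Irr_def)
    qed
    then obtain k where "k \<in> {1..e}" "m0 = n k" using AI by (auto simp: A_def)
    thus ?thesis using nle m0le m0_def m_def by force
  qed
  have mpos: "m > 0" using n1pos m_def by simp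
  have xpos: "x > n e" using assms(6) .
  have neA: "a \<le> n e" if "a \<in> A" for a using that nle by (auto simp: A_def)
  have xnA: "x \<notin> A" using neA xpos by force
  have finA: "finite A" by (simp add: A_def)
  have xS': "x \<in> S'" unfolding S'_def by (rule gen_base) simp
  have dec: "y \<in> S \<or> (\<exists>y'\<in>S'. y = y' + x)" if "y \<in> S'" for y
    using decomp[OF gA, of y x] that by (simp add: S'_def)
  have small: "y \<in> S" if "y \<in> S'" "y < x" for y using dec[OF that(1)] that(2) by auto
  have wS: "wAp S j \<in> S \<and> wAp S j mod m = j mod m" for j
    using wAp_props(1)[OF NS] multS mpos by simp
  have wSle: "wAp S j \<le> z" if "z \<in> S" "z mod m = j mod m" for j z
    using wAp_props(2)[OF NS] multS mpos that by simp
  have xnS: "x \<notin> S"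
  proof
    assume "x \<in> S"
    hence "wAp S (x mod n 1) \<le> x" using wSle[of x "x mod n 1"] m_def by simp
    thus False using assms(9) by simp
  qed
  have clos: "a + b \<in> S'" if "a \<in> S'" "b \<in> S'" for a b using gen_add_closed that S'_def by simp
  have NS': "numerical_semigroup S'"
  proof -
    have "finite (UNIV - S)" using NS by (simp add: numerical_semigroup_def)
    hence "finite (UNIV - S')" using SS' by (meson Diff_mono finite_subset order_refl)
    thus ?thesis unfolding numerical_semigroup_def using clos S'_def gen.gen_zero by blast
  qed
  have multS': "mult S' = m"
  proof -
    have ex: "n 1 \<in> S' \<and> n 1 \<noteq> 0" using n1S n1pos SS' by auto
    have "mult S' \<le> n 1" unfolding mult_def by (rule Least_le[of "\<lambda>x. x \<in> S' \<and> x \<noteq> 0", OF ex])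
    moreover have P: "mult S' \<in> S' \<and> mult S' \<noteq> 0" unfolding mult_def by (rule LeastI[of "\<lambda>x. x \<in> S' \<and> x \<noteq> 0", OF ex])
    moreover have "n 1 \<le> mult S'"
    proof (cases "mult S' < x")
      case True
      hence "mult S' \<in> S" using small P by blast
      thus ?thesis using P wSle multS m_def unfolding mult_def
        by (metis (mono_tags, lifting) Least_le)
    next
      case False thus ?thesis using nle[of e] assms(4) xpos by auto
    qed
    ultimately show ?thesis using m_def by simp
  qed
  have IrrS': "Irr S' = A \<union> {x}"
  proof
    show "Irr S' \<subseteq> A \<union> {x}"
    proof
      fix y assume yI: "y \<in> Irr S'"
      hence "y \<in> S'" by (simp add: Irr_def)
      moreover have "A \<union> {x} \<subseteq> S'" using gA SS' xS' gen_base by blast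
      ultimately show "y \<in> A \<union> {x}" using irr_in[OF _ _ yI NS'] S'_def by blast
    qed
  next
    show "A \<union> {x} \<subseteq> Irr S'"
    proof
      fix y assume yA: "y \<in> A \<union> {x}"
      have yS': "y \<in> S'" using yA gA SS' xS' gen_base by blast
      have yle: "y \<le> x" using yA neA xpos by force
      have y0: "y \<noteq> 0" using yA xpos AI by (auto simp: Irr_def)
      have "p = 0 \<or> q = 0" if "p \<in> S'" "q \<in> S'" "p + q = y" for p q
      proof (rule ccontr)
        assume nz: "\<not> (p = 0 \<or> q = 0)"
        hence "p < x" "q < x" using that yle by auto
        hence pS: "p \<in> S" and qS: "q \<in> S" using small that by auto
        show False
        proof (cases "y = x")
          case True thus False using pS qS that NS xnS by (auto simp: numerical_semigroup_def)
        next
          case False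
          hence "y \<in> Irr S" using yA AI by auto
          thus False using pS qS that nz by (auto simp: Irr_def)
        qed
      qed
      thus "y \<in> Irr S'" using yS' y0 by (auto simp: Irr_def)
    qed
  qed
  have emb: "emb_dim S' = emb_dim S + 1"
    unfolding emb_dim_def using msg_eq[OF NS'] msg_eq[OF NS] IrrS' AI finA xnA by simp
  have wS': "wAp S' j \<in> S' \<and> wAp S' j mod m = j mod m" for j
    using wAp_props(1)[OF NS'] multS' mpos by simp
  have wS'le: "wAp S' j \<le> z" if "z \<in> S'" "z mod m = j mod m" for j z
    using wAp_props(2)[OF NS'] multS' mpos that by simp
  have MS: "wAp S i < wAp S j" if "1 \<le> i" "i < j" "j \<le> m - 1" for i j
    using assms(1) that multS by (simp add: MANS_def)
  have wx: "wAp S i < x" if "1 \<le> i" "i < r" for i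
  proof (cases "i = r - 1")
    case True thus ?thesis using assms(8) r_def m_def by simp
  next
    case False
    have "r < m" using r_def mpos by simp
    hence "wAp S i < wAp S (r - 1)" using MS[of i "r - 1"] that False by simp
    thus ?thesis using assms(8) r_def m_def by simp
  qed
  have P: "\<forall>i. 1 \<le> i \<and> i < y mod m \<longrightarrow> (\<exists>z\<in>S'. z mod m = i \<and> z < y)" if "y \<in> S'" for y
    using that
  proof (induction y rule: less_induct)
    case (less y)
    show ?case
    proof (intro allI impI)
      fix i assume i: "1 \<le> i \<and> i < y mod m"
      have im: "i < m" using i mpos by (meson order.strict_trans mod_less_divisor)
      from dec[OF less.prems] show "\<exists>z\<in>S'. z mod m = i \<and> z < y"
      proof
        assume yS: "y \<in> S"
        have "y mod m < m" using mpos by simp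
        hence "y mod m \<le> m - 1" by linarith
        hence "wAp S i < wAp S (y mod m)" using MS i by simp
        moreover have "wAp S (y mod m) \<le> y" using wSle yS by simp
        ultimately show ?thesis using wS[of i] SS' im by auto
      next
        assume "\<exists>y'\<in>S'. y = y' + x"
        then obtain y' where y': "y' \<in> S'" "y = y' + x" by blast
        show ?thesis
        proof (cases "i < r")
          case True
          thus ?thesis using wx[of i] i wS[of i] SS' im y' by auto
        next
          case False
          define j' where "j' = y' mod m"
          have rm: "r < m" using r_def mpos by simp
          have j'm: "j' < m" using j'_def mpos by simp
          have ymod: "y mod m = (j' + r) mod m" using y' j'_def r_def by (simp add: mod_add_eq)
          have nowrap: "j' + r < m"
          proof (rule ccontr)
            assume nw: "\<not> j' + r < m"
            hence "(j' + r) mod m = (j' + r - m) mod m" using le_mod_geq by simp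
            also have "... = j' + r - m" using j'm rm by simp
            finally have "y mod m = j' + r - m" using ymod by simp
            hence "y mod m < r" using j'm nw by linarith
            thus False using i False by simp
          qed
          hence yj: "y mod m = j' + r" using ymod by simp
          show ?thesis
          proof (cases "i = r")
            case True
            have "j' \<noteq> 0" using yj i True by auto
            hence "y' \<noteq> 0" using j'_def by (metis mod_0)
            thus ?thesis using True xS' y' r_def by auto
          next
            case False2: False
            have "y' < y" using y' xpos by simp
            moreover have "1 \<le> i - r \<and> i - r < y' mod m" using False False2 i yj j'_def by auto
            ultimately obtain z' where z': "z' \<in> S'" "z' mod m = i - r" "z' < y'"
              using less.IH[OF _ y'(1)] by blast
            have "(z' + x) mod m = (z' mod m + x mod m) mod m" by (simp add: mod_add_eq)
            also have "... = (i - r + r) mod m" using z' r_def by simp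
            also have "... = i" using False im by simp
            finally show ?thesis using clos[OF z'(1) xS'] z' y' by auto
          qed
        qed
      qed
    qed
  qed
  have "MANS S'"
    unfolding MANS_def
  proof (intro conjI allI impI)
    show "numerical_semigroup S'" by (rule NS')
    fix i j assume ij: "1 \<le> i \<and> i < j \<and> j \<le> mult S' - 1"
    hence jm: "j < m" using multS' mpos by linarith
    have "wAp S' j mod m = j" using wS' jm by simp
    then obtain z where z: "z \<in> S'" "z mod m = i" "z < wAp S' j"
      using P[of "wAp S' j"] wS' ij by auto
    have "wAp S' i \<le> z" using wS'le[OF z(1)] z(2) ij jm by simp
    thus "wAp S' i < wAp S' j" using z by simp
  qed
  thus ?thesis using emb by (simp add: S'_def A_def)
qed

end
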